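(* Let $\mathbbm k\ge2$ be an integer, $\Gamma$ an infinite set, $\varphi\colon\Gamma\to\Gamma$ an injective map without periodic points, and $w=(w_\gamma)_{\gamma\in\Gamma}\in\mathbb Z_{\mathbbm k}^\Gamma$ invertible. Let $\sigma\colon\mathbb Z_{\mathbbm k}^\Gamma\to\mathbb Z_{\mathbbm k}^\Gamma$ be the weighted shift $(\sigma x)_\gamma=w_\gamma x_{\varphi\gamma}$. Then the $\mathbb Z_+$-semiflow generated by $\sigma$ on $\mathbb Z_{\mathbbm k}^\Gamma$ is weakly mixing, and the $\mathbb Z_+$-semiflow generated by $\sigma\times\sigma$ on $\mathbb Z_{\mathbbm k}^\Gamma\times\mathbb Z_{\mathbbm k}^\Gamma$ is Devaney chaotic.
   Context: $\mathbb Z_{\mathbbm k}=\mathbb Z/\mathbbm k\mathbb Z$ with the discrete topology, $\mathbb Z_{\mathbbm k}^\Gamma$ with the product topology. An element $k\in\mathbb Z_{\mathbbm k}$ is invertible if there is $k^{-1}$ with $kk^{-1}=1\pmod{\mathbbm k}$; $w$ is invertible if every $w_\gamma$ is. $\gamma$ is a periodic point of $\varphi$ if $\varphi^\tau\gamma=\gamma$ for some integer $\tau\ge1$. A $\mathbb Z_+$-semiflow $(f,Z)$ is topologically transitive if for all nonempty open $U,V$ there is $n\ge0$ with $f^nU\cap V\ne\emptyset$; it is weakly mixing if $(f\times f,Z\times Z)$ is topologically transitive; it is Devaney chaotic if it is topologically transitive and its periodic points ($f^nz=z$ for some $n\ge1$) are dense. *)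

theory Defs
  imports "HOL-Analysis.Analysis"
begin

text \<open>Z_k = {0,...,k-1} with the discrete topology; Z_k^Gamma with the product topology.
  The index set Gamma is the universe of a type variable 'g.\<close>
definition Zk_power :: "nat \<Rightarrow> ('g \<Rightarrow> nat) topology" where
  "Zk_power k = product_topology (\<lambda>_. discrete_topology {..<k}) UNIV"

definition invertible_mod :: "nat \<Rightarrow> nat \<Rightarrow> bool" where
  "invertible_mod k a \<longleftrightarrow> (\<exists>b\<in>{..<k}. (a * b) mod k = 1 mod k)"

definition wshift :: "nat \<Rightarrow> ('g \<Rightarrow> nat) \<Rightarrow> ('g \<Rightarrow> 'g) \<Rightarrow> ('g \<Rightarrow> nat) \<Rightarrow> ('g \<Rightarrow> nat)" where
  "wshift k w \<phi> x = (\<lambda>\<gamma>. (w \<gamma> * x (\<phi> \<gamma>)) mod k)"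

definition top_transitive :: "'a topology \<Rightarrow> ('a \<Rightarrow> 'a) \<Rightarrow> bool" where
  "top_transitive Z f \<longleftrightarrow>
     (\<forall>U V. openin Z U \<and> U \<noteq> {} \<and> openin Z V \<and> V \<noteq> {} \<longrightarrow>
        (\<exists>n::nat. (f ^^ n) ` U \<inter> V \<noteq> {}))"

definition prod_map :: "('a \<Rightarrow> 'a) \<Rightarrow> 'a \<times> 'a \<Rightarrow> 'a \<times> 'a" where
  "prod_map f = (\<lambda>(x, y). (f x, f y))"

definition weakly_mixing :: "'a topology \<Rightarrow> ('a \<Rightarrow> 'a) \<Rightarrow> bool" where
  "weakly_mixing Z f \<longleftrightarrow> top_transitive (prod_topology Z Z) (prod_map f)"

definition devaney_chaotic :: "'a topology \<Rightarrow> ('a \<Rightarrow> 'a) \<Rightarrow> bool" where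
  "devaney_chaotic Z f \<longleftrightarrow> top_transitive Z f \<and>
     Z closure_of {z \<in> topspace Z. \<exists>n\<ge>1. (f ^^ n) z = z} = topspace Z"

end

theory Submission
  imports Defs "HOL-Number_Theory.Cong"
begin

lemma topspace_Zk: "topspace (Zk_power k) = {x. \<forall>i. x i < k}"
  by (auto simp: Zk_power_def PiE_iff)

lemma nbhd_Zk:
  assumes "openin (Zk_power k) U" "z \<in> U"
  shows "\<exists>F. finite F \<and> (\<forall>y. (\<forall>i. y i < k) \<and> (\<forall>i\<in>F. y i = z i) \<longrightarrow> y \<in> U)"
proof -
  from assms obtain V where V: "finite {i. V i \<noteq> {..<k}}" "z \<in> Pi\<^sub>E UNIV V" "Pi\<^sub>E UNIV V \<subseteq> U"
    unfolding Zk_power_def openin_product_topology_alt by auto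
  show ?thesis
  proof (intro exI conjI allI impI)
    show "finite {i. V i \<noteq> {..<k}}" by fact
    fix y assume y: "(\<forall>i. y i < k) \<and> (\<forall>i\<in>{i. V i \<noteq> {..<k}}. y i = z i)"
    have "y \<in> Pi\<^sub>E UNIV V"
    proof (simp add: PiE_iff, intro allI)
      fix i show "y i \<in> V i" using y V(2) by (cases "V i = {..<k}") (auto simp: PiE_iff)
    qed
    then show "y \<in> U" using V(3) by blast
  qed
qed

primrec C :: "nat \<Rightarrow> ('g \<Rightarrow> nat) \<Rightarrow> ('g \<Rightarrow> 'g) \<Rightarrow> nat \<Rightarrow> 'g \<Rightarrow> nat" where
  "C k w \<phi> 0 \<gamma> = 1"
| "C k w \<phi> (Suc n) \<gamma> = w \<gamma> * C k w \<phi> n (\<phi> \<gamma>)"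

lemma C_add: "C k w \<phi> (a + b) \<gamma> = C k w \<phi> a \<gamma> * C k w \<phi> b ((\<phi> ^^ a) \<gamma>)"
  by (induction a arbitrary: \<gamma>) (simp_all add: funpow_Suc_right del: funpow.simps)

lemma wshift_pow: assumes "\<forall>i. x i < k"
  shows "((wshift k w \<phi>) ^^ n) x \<gamma> = (C k w \<phi> n \<gamma> * x ((\<phi> ^^ n) \<gamma>)) mod k"
proof (induction n arbitrary: \<gamma>)
  case 0 then show ?case using assms by simp
next
  case (Suc n)
  have "((wshift k w \<phi>) ^^ Suc n) x \<gamma> = (w \<gamma> * (((wshift k w \<phi>) ^^ n) x (\<phi> \<gamma>))) mod k"
    by (simp add: wshift_def)
  also have "\<dots> = (w \<gamma> * ((C k w \<phi> n (\<phi> \<gamma>) * x ((\<phi> ^^ n) (\<phi> \<gamma>))) mod k)) mod k"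
    using Suc by simp
  also have "\<dots> = (C k w \<phi> (Suc n) \<gamma> * x ((\<phi> ^^ Suc n) \<gamma>)) mod k"
    by (simp add: mod_mult_right_eq mult.assoc funpow_Suc_right del: funpow.simps)
  finally show ?case .
qed


definition minv :: "nat \<Rightarrow> nat \<Rightarrow> nat" where
  "minv k a = (SOME b. [a * b = 1] (mod k))"

lemma minv: assumes "coprime a k" shows "[a * minv k a = 1] (mod k)"
  unfolding minv_def using cong_solve_coprime_nat[OF assms] by (auto intro: someI_ex)

lemma minv_mod: assumes "coprime a k" shows "(a * (minv k a * c mod k)) mod k = c mod k"
proof -
  have "(a * (minv k a * c mod k)) mod k = ((a * minv k a) * c) mod k"
    by (simp add: mod_mult_right_eq mult.assoc)
  also have "\<dots> = (((a * minv k a) mod k) * c) mod k" by (simp add: mod_mult_left_eq)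
  also have "\<dots> = ((1 mod k) * c) mod k" using minv[OF assms] by (simp add: cong_def)
  also have "\<dots> = c mod k" by (simp add: mod_mult_left_eq)
  finally show ?thesis .
qed

lemma minv_prod: assumes "coprime u k" "coprime v k"
  shows "(v * (minv k (u * v) * c mod k)) mod k = minv k u * c mod k"
proof -
  have uv: "coprime (u * v) k" using assms by simp
  have "[v * minv k (u * v) * c = v * minv k (u * v) * c * 1] (mod k)" by simp
  also have "[v * minv k (u * v) * c * 1 = v * minv k (u * v) * c * (u * minv k u)] (mod k)"
    using minv[OF assms(1)] by (intro cong_mult cong_refl) (simp add: cong_sym)
  also have "v * minv k (u * v) * c * (u * minv k u) = ((u * v) * minv k (u * v)) * (minv k u * c)"
    by (simp add: algebra_simps)
  also have "[((u * v) * minv k (u * v)) * (minv k u * c) = 1 * (minv k u * c)] (mod k)"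
    using minv[OF uv] by (intro cong_mult cong_refl)
  finally have "[v * minv k (u * v) * c = minv k u * c] (mod k)" by simp
  then show ?thesis by (simp add: cong_def mod_mult_right_eq mult.assoc)
qed

lemma invertible_coprime: assumes "k \<ge> 2" "invertible_mod k a" shows "coprime a k"
proof -
  obtain b where "(a * b) mod k = 1 mod k" using assms(2) unfolding invertible_mod_def by auto
  then have "[a * b = 1] (mod k)" by (simp add: cong_def)
  then have "coprime (a * b) k" by (rule cong_imp_coprime[OF cong_sym]) simp
  then show ?thesis by simp
qed

lemma C_coprime: assumes "k \<ge> 2" "\<forall>\<gamma>. invertible_mod k (w \<gamma>)" shows "coprime (C k w \<phi> n \<gamma>) k"
  using assms invertible_coprime by (induction n arbitrary: \<gamma>) auto

lemma pow_uniq: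
  assumes "inj \<phi>" "\<forall>\<gamma> \<tau>. \<tau> \<ge> 1 \<longrightarrow> (\<phi> ^^ \<tau>) \<gamma> \<noteq> \<gamma>" "(\<phi> ^^ a) \<gamma> = (\<phi> ^^ b) \<gamma>"
  shows "a = b"
proof -
  have *: "a = b" if "a \<le> b" "(\<phi> ^^ a) \<gamma> = (\<phi> ^^ b) \<gamma>" for a b
  proof (rule ccontr)
    assume "a \<noteq> b"
    have "(\<phi> ^^ b) \<gamma> = (\<phi> ^^ (a + (b - a))) \<gamma>" using that by simp
    also have "\<dots> = (\<phi> ^^ a) ((\<phi> ^^ (b - a)) \<gamma>)" by (simp only: funpow_add comp_apply)
    finally have "(\<phi> ^^ a) \<gamma> = (\<phi> ^^ a) ((\<phi> ^^ (b - a)) \<gamma>)" using that by simp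
    then have "\<gamma> = (\<phi> ^^ (b - a)) \<gamma>" using injD[OF inj_fn[OF assms(1)]] by metis
    then show False using assms(2) \<open>a \<noteq> b\<close> that(1) by (metis Suc_leI zero_less_diff le_neq_implies_less One_nat_def)
  qed
  show ?thesis using *[of a b] *[of b a] assms(3) by (cases "a \<le> b") auto
qed

lemma finite_hits:
  assumes "inj \<phi>" "\<forall>\<gamma> \<tau>. \<tau> \<ge> 1 \<longrightarrow> (\<phi> ^^ \<tau>) \<gamma> \<noteq> \<gamma>"
  shows "finite {n. (\<phi> ^^ n) \<gamma> = \<delta>}"
proof (cases "\<exists>n. (\<phi> ^^ n) \<gamma> = \<delta>")
  case True
  then obtain n0 where "(\<phi> ^^ n0) \<gamma> = \<delta>" by auto
  then have "{n. (\<phi> ^^ n) \<gamma> = \<delta>} \<subseteq> {n0}" using pow_uniq[OF assms] by auto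
  then show ?thesis using finite_subset by blast
qed simp

lemma finite_hits_set:
  assumes "inj \<phi>" "\<forall>\<gamma> \<tau>. \<tau> \<ge> 1 \<longrightarrow> (\<phi> ^^ \<tau>) \<gamma> \<noteq> \<gamma>" "finite F" "finite G"
  shows "\<exists>N. \<forall>n\<ge>N. \<forall>\<gamma>\<in>G. \<forall>\<delta>\<in>F. (\<phi> ^^ n) \<gamma> \<noteq> \<delta>"
proof -
  have "{n. \<exists>\<gamma>\<in>G. \<exists>\<delta>\<in>F. (\<phi> ^^ n) \<gamma> = \<delta>} = (\<Union>\<gamma>\<in>G. \<Union>\<delta>\<in>F. {n. (\<phi> ^^ n) \<gamma> = \<delta>})" by auto
  moreover have "finite (\<Union>\<gamma>\<in>G. \<Union>\<delta>\<in>F. {n. (\<phi> ^^ n) \<gamma> = \<delta>})"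
    using assms finite_hits[OF assms(1,2)] by auto
  ultimately have "finite {n. \<exists>\<gamma>\<in>G. \<exists>\<delta>\<in>F. (\<phi> ^^ n) \<gamma> = \<delta>}" by simp
  then obtain m where "\<forall>n\<in>{n. \<exists>\<gamma>\<in>G. \<exists>\<delta>\<in>F. (\<phi> ^^ n) \<gamma> = \<delta>}. n \<le> m"
    using finite_nat_set_iff_bounded_le by blast
  then show ?thesis by (intro exI[of _ "Suc m"]) force
qed


lemma L1:
  fixes \<phi> :: "'g \<Rightarrow> 'g"
  assumes k2: "k \<ge> 2" and inj: "inj \<phi>" and ap: "\<forall>\<gamma> \<tau>. \<tau> \<ge> 1 \<longrightarrow> (\<phi> ^^ \<tau>) \<gamma> \<noteq> \<gamma>"
    and wk: "\<forall>\<gamma>. w \<gamma> < k \<and> invertible_mod k (w \<gamma>)"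
    and fin: "finite F" "finite G"
  shows "\<exists>N. \<forall>n\<ge>N. \<forall>a c. (\<forall>i. a i < k) \<longrightarrow> (\<forall>i. c i < k) \<longrightarrow>
     (\<exists>x. (\<forall>i. x i < k) \<and> (\<forall>i\<in>F. x i = a i) \<and> (\<forall>i\<in>G. ((wshift k w \<phi>) ^^ n) x i = c i))"
proof -
  obtain N where N: "\<forall>n\<ge>N. \<forall>\<gamma>\<in>G. \<forall>\<delta>\<in>F. (\<phi> ^^ n) \<gamma> \<noteq> \<delta>"
    using finite_hits_set[OF inj ap fin(1,2)] by blast
  have cop: "coprime (C k w \<phi> n \<gamma>) k" for n \<gamma> by (rule C_coprime[OF k2]) (use wk in auto)
  show ?thesis
  proof (rule exI[of _ N], intro allI impI)
    fix n and a c :: "'g \<Rightarrow> nat" assume n: "N \<le> n" and a: "\<forall>i. a i < k" and c: "\<forall>i. c i < k"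
    define f where "f = \<phi> ^^ n"
    have injf: "inj f" unfolding f_def using inj_fn[OF inj] .
    define x where "x = (\<lambda>\<gamma>'. if \<gamma>' \<in> f ` G then (minv k (C k w \<phi> n (inv f \<gamma>')) * c (inv f \<gamma>')) mod k else a \<gamma>')"
    have xk: "\<forall>i. x i < k" using a k2 by (auto simp: x_def)
    show "\<exists>x. (\<forall>i. x i < k) \<and> (\<forall>i\<in>F. x i = a i) \<and> (\<forall>i\<in>G. ((wshift k w \<phi>) ^^ n) x i = c i)"
    proof (intro exI conjI ballI)
      show "\<forall>i. x i < k" by fact
      fix i assume "i \<in> F"
      then have "i \<notin> f ` G" using N n unfolding f_def by blast
      then show "x i = a i" by (simp add: x_def)
    next
      fix i assume iG: "i \<in> G"
      have "x (f i) = (minv k (C k w \<phi> n i) * c i) mod k"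
        using iG injf by (simp add: x_def)
      then have "((wshift k w \<phi>) ^^ n) x i = (C k w \<phi> n i * ((minv k (C k w \<phi> n i) * c i) mod k)) mod k"
        using wshift_pow[OF xk] unfolding f_def by simp
      also have "\<dots> = c i mod k" using minv_mod[OF cop] by simp
      finally show "((wshift k w \<phi>) ^^ n) x i = c i" using c by simp
    qed
  qed
qed


lemma L2:
  fixes \<phi> :: "'g \<Rightarrow> 'g"
  assumes k2: "k \<ge> 2" and inj: "inj \<phi>" and ap: "\<forall>\<gamma> \<tau>. \<tau> \<ge> 1 \<longrightarrow> (\<phi> ^^ \<tau>) \<gamma> \<noteq> \<gamma>"
    and wk: "\<forall>\<gamma>. w \<gamma> < k \<and> invertible_mod k (w \<gamma>)"
    and fin: "finite F"
  shows "\<exists>N\<ge>1. \<forall>n\<ge>N. \<forall>a::'g\<Rightarrow>nat. (\<forall>i. a i < k) \<longrightarrow>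
     (\<exists>x. (\<forall>i. x i < k) \<and> (\<forall>i\<in>F. x i = a i) \<and> ((wshift k w \<phi>) ^^ n) x = x)"
proof -
  obtain N0 where N0: "\<forall>d\<ge>N0. \<forall>\<gamma>\<in>F. \<forall>\<delta>\<in>F. (\<phi> ^^ d) \<gamma> \<noteq> \<delta>"
    using finite_hits_set[OF inj ap fin fin] by blast
  have cop: "coprime (C k w \<phi> n \<gamma>) k" for n \<gamma> by (rule C_coprime[OF k2]) (use wk in auto)
  have pw: "(\<phi> ^^ (a + b)) \<gamma> = (\<phi> ^^ a) ((\<phi> ^^ b) \<gamma>)" for a b \<gamma> by (simp add: funpow_add)
  have injm: "(\<phi> ^^ m) u = (\<phi> ^^ m) v \<Longrightarrow> u = v" for m u v using injD[OF inj_fn[OF inj]] by metis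
  show ?thesis
  proof (rule exI[of _ "Suc N0"], intro conjI allI impI)
    show "1 \<le> Suc N0" by simp
    fix n and a :: "'g \<Rightarrow> nat" assume n: "Suc N0 \<le> n" and a: "\<forall>i. a i < k"
    have bad: "\<And>d \<gamma> \<delta>. d \<ge> n \<Longrightarrow> \<gamma> \<in> F \<Longrightarrow> \<delta> \<in> F \<Longrightarrow> (\<phi> ^^ d) \<gamma> \<noteq> \<delta>"
      using N0 n by auto
    have jn: "j * n \<ge> n" if "j \<ge> 1" for j :: nat using that by simp
    define P where "P = (\<lambda>\<gamma> j \<delta>. \<delta> \<in> F \<and> (\<phi> ^^ (j * n)) \<gamma> = \<delta>)"
    define Q where "Q = (\<lambda>\<gamma> j \<delta>. \<delta> \<in> F \<and> j \<ge> (1::nat) \<and> \<gamma> = (\<phi> ^^ (j * n)) \<delta>)"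
    have UP1: "j = j' \<and> \<delta> = \<delta>'" if "P \<gamma> j \<delta>" "P \<gamma> j' \<delta>'" "j \<le> j'" for \<gamma> j \<delta> j' \<delta>'
    proof -
      have "(\<phi> ^^ (j' * n)) \<gamma> = (\<phi> ^^ ((j' - j) * n + j * n)) \<gamma>"
        using that(3) by (simp add: add_mult_distrib[symmetric])
      then have "(\<phi> ^^ ((j' - j) * n)) \<delta> = \<delta>'" using that(1,2) pw unfolding P_def by metis
      then have "j' = j"
        using bad[of "(j' - j) * n" \<delta> \<delta>'] jn[of "j' - j"] that unfolding P_def by (cases "j' = j") auto
      then show ?thesis using that unfolding P_def by auto
    qed
    have UP: "j = j' \<and> \<delta> = \<delta>'" if "P \<gamma> j \<delta>" "P \<gamma> j' \<delta>'" for \<gamma> j \<delta> j' \<delta>'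
      using UP1[OF that] UP1[OF that(2,1)] by (cases "j \<le> j'") auto
    have UQ1: "j = j' \<and> \<delta> = \<delta>'" if "Q \<gamma> j \<delta>" "Q \<gamma> j' \<delta>'" "j \<le> j'" for \<gamma> j \<delta> j' \<delta>'
    proof -
      have "(\<phi> ^^ (j' * n)) \<delta>' = (\<phi> ^^ (j * n + (j' - j) * n)) \<delta>'"
        using that(3) by (simp add: add_mult_distrib[symmetric])
      then have "(\<phi> ^^ (j * n)) \<delta> = (\<phi> ^^ (j * n)) ((\<phi> ^^ ((j' - j) * n)) \<delta>')"
        using that(1,2) pw unfolding Q_def by metis
      then have e: "\<delta> = (\<phi> ^^ ((j' - j) * n)) \<delta>'" by (rule injm)
      then have "j' = j"
        using bad[of "(j' - j) * n" \<delta>' \<delta>] jn[of "j' - j"] that unfolding Q_def by (cases "j' = j") auto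
      then show ?thesis using e by simp
    qed
    have UQ: "j = j' \<and> \<delta> = \<delta>'" if "Q \<gamma> j \<delta>" "Q \<gamma> j' \<delta>'" for \<gamma> j \<delta> j' \<delta>'
      using UQ1[OF that] UQ1[OF that(2,1)] by (cases "j \<le> j'") auto
    have PQ: False if "P \<gamma> j \<delta>" "Q \<gamma> j' \<delta>'" for \<gamma> j \<delta> j' \<delta>'
    proof -
      have "(\<phi> ^^ ((j + j') * n)) \<delta>' = (\<phi> ^^ (j * n)) ((\<phi> ^^ (j' * n)) \<delta>')"
        using pw by (simp add: add_mult_distrib)
      then have "(\<phi> ^^ ((j + j') * n)) \<delta>' = \<delta>" using that unfolding P_def Q_def by simp
      moreover have "(j + j') * n \<ge> n" using that jn[of "j + j'"] unfolding Q_def by simp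
      ultimately show False using bad that unfolding P_def Q_def by blast
    qed
    define x where "x = (\<lambda>\<gamma>. if \<exists>p. P \<gamma> (fst p) (snd p) then
        (let p = SOME p. P \<gamma> (fst p) (snd p) in C k w \<phi> (fst p * n) \<gamma> * a (snd p) mod k)
      else if \<exists>p. Q \<gamma> (fst p) (snd p) then
        (let p = SOME p. Q \<gamma> (fst p) (snd p) in minv k (C k w \<phi> (fst p * n) (snd p)) * a (snd p) mod k)
      else 0)"
    have xP: "x \<gamma> = C k w \<phi> (j * n) \<gamma> * a \<delta> mod k" if "P \<gamma> j \<delta>" for \<gamma> j \<delta>
    proof -
      have ex: "\<exists>p. P \<gamma> (fst p) (snd p)" using that by (intro exI[of _ "(j, \<delta>)"]) simp
      define p where "p = (SOME p. P \<gamma> (fst p) (snd p))"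
      have "P \<gamma> (fst p) (snd p)" unfolding p_def using someI_ex[OF ex] .
      then have "fst p = j" "snd p = \<delta>" using UP[OF that] by auto
      then show ?thesis using ex unfolding x_def p_def[symmetric] by (simp add: Let_def)
    qed
    have xQ: "x \<gamma> = minv k (C k w \<phi> (j * n) \<delta>) * a \<delta> mod k" if "Q \<gamma> j \<delta>" for \<gamma> j \<delta>
    proof -
      have nP: "\<not> (\<exists>p. P \<gamma> (fst p) (snd p))" using PQ that by blast
      have ex: "\<exists>p. Q \<gamma> (fst p) (snd p)" using that by (intro exI[of _ "(j, \<delta>)"]) simp
      define p where "p = (SOME p. Q \<gamma> (fst p) (snd p))"
      have "Q \<gamma> (fst p) (snd p)" unfolding p_def using someI_ex[OF ex] .
      then have "fst p = j" "snd p = \<delta>" using UQ[OF that] by auto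
      then show ?thesis using ex nP unfolding x_def p_def[symmetric] by (simp add: Let_def)
    qed
    have x0: "x \<gamma> = 0" if "\<not> (\<exists>j \<delta>. P \<gamma> j \<delta>)" "\<not> (\<exists>j \<delta>. Q \<gamma> j \<delta>)" for \<gamma>
      using that unfolding x_def by auto
    have xk: "\<forall>i. x i < k" using k2 unfolding x_def by (auto simp: Let_def)
    show "\<exists>x. (\<forall>i. x i < k) \<and> (\<forall>i\<in>F. x i = a i) \<and> ((wshift k w \<phi>) ^^ n) x = x"
    proof (intro exI conjI ballI)
      show "\<forall>i. x i < k" by fact
      fix i assume "i \<in> F"
      then have "P i 0 i" unfolding P_def by simp
      then show "x i = a i" using xP[of i 0 i] a by simp
    next
      show "((wshift k w \<phi>) ^^ n) x = x"
      proof
        fix \<gamma>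
        have sx: "((wshift k w \<phi>) ^^ n) x \<gamma> = C k w \<phi> n \<gamma> * x ((\<phi> ^^ n) \<gamma>) mod k"
          using wshift_pow[OF xk] .
        show "((wshift k w \<phi>) ^^ n) x \<gamma> = x \<gamma>"
        proof (cases "\<exists>j \<delta>. P \<gamma> j \<delta>")
          case True
          then obtain j \<delta> where Pj: "P \<gamma> j \<delta>" by blast
          show ?thesis
          proof (cases j)
            case 0
            then have g: "\<gamma> = \<delta>" "\<delta> \<in> F" using Pj unfolding P_def by auto
            have "Q ((\<phi> ^^ n) \<gamma>) 1 \<delta>" using g unfolding Q_def by simp
            then have "x ((\<phi> ^^ n) \<gamma>) = minv k (C k w \<phi> n \<delta>) * a \<delta> mod k" using xQ by fastforce
            then have "((wshift k w \<phi>) ^^ n) x \<gamma> = a \<delta> mod k" using sx minv_mod[OF cop] g by simp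
            moreover have "x \<gamma> = a \<delta> mod k" using xP[OF Pj] 0 g by simp
            ultimately show ?thesis by simp
          next
            case (Suc i)
            have "(\<phi> ^^ (i * n)) ((\<phi> ^^ n) \<gamma>) = (\<phi> ^^ (j * n)) \<gamma>"
              using pw[of "i * n" n \<gamma>] Suc by (simp add: add.commute)
            then have "P ((\<phi> ^^ n) \<gamma>) i \<delta>" using Pj unfolding P_def by simp
            then have "x ((\<phi> ^^ n) \<gamma>) = C k w \<phi> (i * n) ((\<phi> ^^ n) \<gamma>) * a \<delta> mod k" by (rule xP)
            then have "((wshift k w \<phi>) ^^ n) x \<gamma>
                = (C k w \<phi> n \<gamma> * C k w \<phi> (i * n) ((\<phi> ^^ n) \<gamma>)) * a \<delta> mod k"
              using sx by (simp add: mod_mult_right_eq mult.assoc)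
            also have "\<dots> = C k w \<phi> (j * n) \<gamma> * a \<delta> mod k"
              using C_add[of k w \<phi> n "i * n" \<gamma>] Suc by simp
            finally show ?thesis using xP[OF Pj] by simp
          qed
        next
          case nP: False
          show ?thesis
          proof (cases "\<exists>j \<delta>. Q \<gamma> j \<delta>")
            case True
            then obtain j \<delta> where Qj: "Q \<gamma> j \<delta>" by blast
            have "(\<phi> ^^ (Suc j * n)) \<delta> = (\<phi> ^^ n) ((\<phi> ^^ (j * n)) \<delta>)" using pw[of n "j * n" \<delta>] by simp
            then have "Q ((\<phi> ^^ n) \<gamma>) (Suc j) \<delta>" using Qj unfolding Q_def by simp
            then have "x ((\<phi> ^^ n) \<gamma>) = minv k (C k w \<phi> (Suc j * n) \<delta>) * a \<delta> mod k" by (rule xQ)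
            moreover have "C k w \<phi> (Suc j * n) \<delta> = C k w \<phi> (j * n) \<delta> * C k w \<phi> n \<gamma>"
              using C_add[of k w \<phi> "j * n" n \<delta>] Qj unfolding Q_def by (simp add: add.commute)
            ultimately have "((wshift k w \<phi>) ^^ n) x \<gamma> = minv k (C k w \<phi> (j * n) \<delta>) * a \<delta> mod k"
              using sx minv_prod[OF cop cop] by simp
            then show ?thesis using xQ[OF Qj] by simp
          next
            case nQ: False
            have "\<not> P ((\<phi> ^^ n) \<gamma>) j \<delta>" for j \<delta>
            proof
              assume "P ((\<phi> ^^ n) \<gamma>) j \<delta>"
              moreover have "(\<phi> ^^ (Suc j * n)) \<gamma> = (\<phi> ^^ (j * n)) ((\<phi> ^^ n) \<gamma>)"
                using pw[of "j * n" n \<gamma>] by (simp add: add.commute)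
              ultimately have "P \<gamma> (Suc j) \<delta>" unfolding P_def by simp
              then show False using nP by blast
            qed
            moreover have "\<not> Q ((\<phi> ^^ n) \<gamma>) j \<delta>" for j \<delta>
            proof
              assume q: "Q ((\<phi> ^^ n) \<gamma>) j \<delta>"
              then obtain i where i: "j = Suc i" unfolding Q_def by (cases j) auto
              have "(\<phi> ^^ (Suc i * n)) \<delta> = (\<phi> ^^ n) ((\<phi> ^^ (i * n)) \<delta>)" using pw[of n "i * n" \<delta>] by simp
              then have "\<gamma> = (\<phi> ^^ (i * n)) \<delta>" using q i injm unfolding Q_def by metis
              moreover have "\<delta> \<in> F" using q unfolding Q_def by simp
              ultimately show False
              proof (cases i)
                case 0
                then have "P \<gamma> 0 \<delta>" using \<open>\<gamma> = _\<close> \<open>\<delta> \<in> F\<close> unfolding P_def by simp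
                then show False using nP by blast
              next
                case (Suc i')
                then have "Q \<gamma> i \<delta>" using \<open>\<gamma> = _\<close> \<open>\<delta> \<in> F\<close> unfolding Q_def by simp
                then show False using nQ by blast
              qed
            qed
            ultimately have "x ((\<phi> ^^ n) \<gamma>) = 0" using x0 by blast
            then show ?thesis using sx x0 nP nQ by simp
          qed
        qed
      qed
    qed
  qed
qed


lemma prod_map_pow: "((prod_map f) ^^ n) (x, y) = ((f ^^ n) x, (f ^^ n) y)"
  by (induction n) (simp_all add: prod_map_def)

lemma pt_nbhd:
  assumes "openin (prod_topology (Zk_power k) (Zk_power k)) W" "(a, b) \<in> W"
  shows "\<exists>F1 F2. finite F1 \<and> finite F2 \<and> (\<forall>i. a i < k) \<and> (\<forall>i. b i < k) \<and>
     (\<forall>x y. (\<forall>i. x i < k) \<longrightarrow> (\<forall>i. y i < k) \<longrightarrow> (\<forall>i\<in>F1. x i = a i) \<longrightarrow> (\<forall>i\<in>F2. y i = b i) \<longrightarrow> (x, y) \<in> W)"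
proof -
  have "\<exists>U V. openin (Zk_power k) U \<and> openin (Zk_power k) V \<and> a \<in> U \<and> b \<in> V \<and> U \<times> V \<subseteq> W"
    using assms(1)[unfolded openin_prod_topology_alt, rule_format, OF assms(2)] .
  then obtain U V where UV: "openin (Zk_power k) U" "openin (Zk_power k) V" "a \<in> U" "b \<in> V" "U \<times> V \<subseteq> W"
    by (elim exE conjE)
  obtain F1 where F1: "finite F1" "\<forall>y. (\<forall>i. y i < k) \<and> (\<forall>i\<in>F1. y i = a i) \<longrightarrow> y \<in> U"
    using nbhd_Zk[OF UV(1,3)] by blast
  obtain F2 where F2: "finite F2" "\<forall>y. (\<forall>i. y i < k) \<and> (\<forall>i\<in>F2. y i = b i) \<longrightarrow> y \<in> V"
    using nbhd_Zk[OF UV(2,4)] by blast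
  have "a \<in> topspace (Zk_power k)" "b \<in> topspace (Zk_power k)"
    using openin_subset[OF UV(1)] openin_subset[OF UV(2)] UV(3,4) by auto
  then have ab: "\<forall>i. a i < k" "\<forall>i. b i < k" by (auto simp: topspace_Zk)
  have "(x, y) \<in> W" if "\<forall>i. x i < k" "\<forall>i. y i < k" "\<forall>i\<in>F1. x i = a i" "\<forall>i\<in>F2. y i = b i" for x y
  proof -
    have "x \<in> U" using F1(2) that by blast
    moreover have "y \<in> V" using F2(2) that by blast
    ultimately show ?thesis using UV(5) by blast
  qed
  then show ?thesis using F1(1) F2(1) ab by blast
qed

lemma trans_prod:
  fixes \<phi> :: "'g \<Rightarrow> 'g"
  assumes k2: "k \<ge> 2" and inj: "inj \<phi>" and ap: "\<forall>\<gamma> \<tau>. \<tau> \<ge> 1 \<longrightarrow> (\<phi> ^^ \<tau>) \<gamma> \<noteq> \<gamma>"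
    and wk: "\<forall>\<gamma>. w \<gamma> < k \<and> invertible_mod k (w \<gamma>)"
  shows "top_transitive (prod_topology (Zk_power k) (Zk_power k)) (prod_map (wshift k w \<phi>))"
  unfolding top_transitive_def
proof (intro allI impI)
  fix U V :: "(('g \<Rightarrow> nat) \<times> ('g \<Rightarrow> nat)) set"
  assume h: "openin (prod_topology (Zk_power k) (Zk_power k)) U \<and> U \<noteq> {} \<and>
    openin (prod_topology (Zk_power k) (Zk_power k)) V \<and> V \<noteq> {}"
  obtain a b where ab: "(a, b) \<in> U" using h by auto
  obtain c d where cd: "(c, d) \<in> V" using h by auto
  have hU: "openin (prod_topology (Zk_power k) (Zk_power k)) U" and hV: "openin (prod_topology (Zk_power k) (Zk_power k)) V"
    using h by auto
  obtain F1 F2 where Fall: "finite F1 \<and> finite F2 \<and> (\<forall>i. a i < k) \<and> (\<forall>i. b i < k) \<and>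
     (\<forall>x y. (\<forall>i. x i < k) \<longrightarrow> (\<forall>i. y i < k) \<longrightarrow> (\<forall>i\<in>F1. x i = a i) \<longrightarrow> (\<forall>i\<in>F2. y i = b i) \<longrightarrow> (x, y) \<in> U)"
    using pt_nbhd[OF hU ab] by (elim exE) (rule that)
  have F: "finite F1" "finite F2" "\<forall>i. a i < k" "\<forall>i. b i < k"
     "\<And>x y. \<forall>i. x i < k \<Longrightarrow> \<forall>i. y i < k \<Longrightarrow> \<forall>i\<in>F1. x i = a i \<Longrightarrow> \<forall>i\<in>F2. y i = b i \<Longrightarrow> (x, y) \<in> U"
    using Fall by auto
  obtain G1 G2 where Gall: "finite G1 \<and> finite G2 \<and> (\<forall>i. c i < k) \<and> (\<forall>i. d i < k) \<and>
     (\<forall>x y. (\<forall>i. x i < k) \<longrightarrow> (\<forall>i. y i < k) \<longrightarrow> (\<forall>i\<in>G1. x i = c i) \<longrightarrow> (\<forall>i\<in>G2. y i = d i) \<longrightarrow> (x, y) \<in> V)"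
    using pt_nbhd[OF hV cd] by (elim exE) (rule that)
  have G: "finite G1" "finite G2" "\<forall>i. c i < k" "\<forall>i. d i < k"
     "\<And>x y. \<forall>i. x i < k \<Longrightarrow> \<forall>i. y i < k \<Longrightarrow> \<forall>i\<in>G1. x i = c i \<Longrightarrow> \<forall>i\<in>G2. y i = d i \<Longrightarrow> (x, y) \<in> V"
    using Gall by auto
  have fF: "finite (F1 \<union> F2)" "finite (G1 \<union> G2)" using F G by auto
  obtain N where N: "\<forall>n\<ge>N. \<forall>a c. (\<forall>i. a i < k) \<longrightarrow> (\<forall>i. c i < k) \<longrightarrow>
     (\<exists>x. (\<forall>i. x i < k) \<and> (\<forall>i\<in>F1 \<union> F2. x i = a i) \<and> (\<forall>i\<in>G1 \<union> G2. ((wshift k w \<phi>) ^^ n) x i = c i))"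
    using L1[OF k2 inj ap wk fF] by (elim exE)
  have "\<exists>x. (\<forall>i. x i < k) \<and> (\<forall>i\<in>F1 \<union> F2. x i = a i) \<and> (\<forall>i\<in>G1 \<union> G2. ((wshift k w \<phi>) ^^ N) x i = c i)"
    by (rule N[rule_format, OF le_refl]) (use F(3) G(3) in auto)
  then obtain x where x: "\<forall>i. x i < k" "\<forall>i\<in>F1 \<union> F2. x i = a i" "\<forall>i\<in>G1 \<union> G2. ((wshift k w \<phi>) ^^ N) x i = c i"
    by (elim exE conjE)
  have "\<exists>y. (\<forall>i. y i < k) \<and> (\<forall>i\<in>F1 \<union> F2. y i = b i) \<and> (\<forall>i\<in>G1 \<union> G2. ((wshift k w \<phi>) ^^ N) y i = d i)"
    by (rule N[rule_format, OF le_refl]) (use F(4) G(4) in auto)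
  then obtain y where y: "\<forall>i. y i < k" "\<forall>i\<in>F1 \<union> F2. y i = b i" "\<forall>i\<in>G1 \<union> G2. ((wshift k w \<phi>) ^^ N) y i = d i"
    by (elim exE conjE)
  have k0: "k > 0" using k2 by simp
  have "(x, y) \<in> U" by (rule F(5)) (use x y in auto)
  moreover have "((prod_map (wshift k w \<phi>)) ^^ N) (x, y) \<in> V"
    unfolding prod_map_pow
  proof (rule G(5))
    show "\<forall>i. ((wshift k w \<phi>) ^^ N) x i < k" "\<forall>i. ((wshift k w \<phi>) ^^ N) y i < k"
      using wshift_pow[OF x(1)] wshift_pow[OF y(1)] k0 by simp_all
    show "\<forall>i\<in>G1. ((wshift k w \<phi>) ^^ N) x i = c i" "\<forall>i\<in>G2. ((wshift k w \<phi>) ^^ N) y i = d i"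
      using x(3) y(3) by auto
  qed
  ultimately show "\<exists>n. (prod_map (wshift k w \<phi>) ^^ n) ` U \<inter> V \<noteq> {}" by blast
qed

theorem theorem6:
  fixes k :: nat and \<phi> :: "'g \<Rightarrow> 'g" and w :: "'g \<Rightarrow> nat"
  assumes "k \<ge> 2"
    and "infinite (UNIV :: 'g set)"
    and "inj \<phi>"
    and "\<forall>\<gamma> \<tau>. \<tau> \<ge> 1 \<longrightarrow> (\<phi> ^^ \<tau>) \<gamma> \<noteq> \<gamma>"
    and "\<forall>\<gamma>. w \<gamma> < k \<and> invertible_mod k (w \<gamma>)"
  shows "weakly_mixing (Zk_power k) (wshift k w \<phi>)
       \<and> devaney_chaotic (prod_topology (Zk_power k) (Zk_power k)) (prod_map (wshift k w \<phi>))"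
proof -
  let ?X = "prod_topology (Zk_power k) (Zk_power k)"
  let ?f = "prod_map (wshift k w \<phi>)"
  let ?P = "{z \<in> topspace ?X. \<exists>n\<ge>1. (?f ^^ n) z = z}"
  have T: "top_transitive ?X ?f"
    using trans_prod[OF assms(1,3,4,5)] .
  have "(a, b) \<in> ?X closure_of ?P" if ab: "(a, b) \<in> topspace ?X" for a b
    unfolding in_closure_of
  proof (intro conjI allI impI)
    show "(a, b) \<in> topspace ?X" by fact
    fix T assume hT: "(a, b) \<in> T \<and> openin ?X T"
    have hT1: "openin ?X T" and hT2: "(a, b) \<in> T" using hT by auto
    obtain F1 F2 where Fall: "finite F1 \<and> finite F2 \<and> (\<forall>i. a i < k) \<and> (\<forall>i. b i < k) \<and>
     (\<forall>x y. (\<forall>i. x i < k) \<longrightarrow> (\<forall>i. y i < k) \<longrightarrow> (\<forall>i\<in>F1. x i = a i) \<longrightarrow> (\<forall>i\<in>F2. y i = b i) \<longrightarrow> (x, y) \<in> T)"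
    using pt_nbhd[OF hT1 hT2] by (elim exE) (rule that)
  have F: "finite F1" "finite F2" "\<forall>i. a i < k" "\<forall>i. b i < k"
     "\<And>x y. \<forall>i. x i < k \<Longrightarrow> \<forall>i. y i < k \<Longrightarrow> \<forall>i\<in>F1. x i = a i \<Longrightarrow> \<forall>i\<in>F2. y i = b i \<Longrightarrow> (x, y) \<in> T"
    using Fall by auto
    have fF: "finite (F1 \<union> F2)" using F by auto
    obtain N where N: "N \<ge> 1" "\<forall>n\<ge>N. \<forall>a::'g\<Rightarrow>nat. (\<forall>i. a i < k) \<longrightarrow>
           (\<exists>x. (\<forall>i. x i < k) \<and> (\<forall>i\<in>F1 \<union> F2. x i = a i) \<and> ((wshift k w \<phi>) ^^ n) x = x)"
      using L2[OF assms(1,3,4,5) fF] by (elim exE conjE)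
    have "\<exists>x. (\<forall>i. x i < k) \<and> (\<forall>i\<in>F1 \<union> F2. x i = a i) \<and> ((wshift k w \<phi>) ^^ N) x = x"
      by (rule N(2)[rule_format, OF le_refl]) (use F(3) in auto)
    then obtain x where x: "\<forall>i. x i < k" "\<forall>i\<in>F1 \<union> F2. x i = a i" "((wshift k w \<phi>) ^^ N) x = x"
      by (elim exE conjE)
    have "\<exists>y. (\<forall>i. y i < k) \<and> (\<forall>i\<in>F1 \<union> F2. y i = b i) \<and> ((wshift k w \<phi>) ^^ N) y = y"
      by (rule N(2)[rule_format, OF le_refl]) (use F(4) in auto)
    then obtain y where y: "\<forall>i. y i < k" "\<forall>i\<in>F1 \<union> F2. y i = b i" "((wshift k w \<phi>) ^^ N) y = y"
      by (elim exE conjE)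
    have "(x, y) \<in> T" by (rule F(5)) (use x y in auto)
    moreover have "(x, y) \<in> topspace ?X"
      using x(1) y(1) by (simp add: topspace_Zk)
    moreover have "(?f ^^ N) (x, y) = (x, y)"
      using x(3) y(3) by (simp add: prod_map_pow)
    ultimately show "\<exists>z. z \<in> ?P \<and> z \<in> T"
      using N(1) by blast
  qed
  then have "topspace ?X \<subseteq> ?X closure_of ?P" by auto
  then have D: "?X closure_of ?P = topspace ?X"
    by (rule subset_antisym[OF closure_of_subset_topspace])
  show ?thesis unfolding weakly_mixing_def devaney_chaotic_def by (intro conjI T D)
qed

end
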